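(* Let $F_\infty$ be the free group on a countably infinite set. Then neither $\mathrm{Aut}(F_\infty)$ nor $\mathrm{Out}(F_\infty)$ is residually finite, and neither satisfies the Tits alternative.
   Context: A group is residually finite if for every nontrivial element there is a homomorphism to a finite group not killing it. A group satisfies the Tits alternative if every subgroup either is virtually solvable or contains a nonabelian free subgroup. *)

theory Defs
  imports "HOL-Algebra.Algebra"
begin

text \<open>A letter is a pair (x, b): generator x, and b = True meaning the inverse of x.\<close>

definition inv_letter :: "'a \<times> bool \<Rightarrow> 'a \<times> bool" where
  "inv_letter l = (fst l, \<not> snd l)"

fun free_reduce :: "('a \<times> bool) list \<Rightarrow> ('a \<times> bool) list" where
  "free_reduce [] = []"
| "free_reduce (l # w) =
     (case free_reduce w of
        [] \<Rightarrow> [l]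
      | m # w' \<Rightarrow> (if m = inv_letter l then w' else l # m # w'))"

fun reduced_word :: "('a \<times> bool) list \<Rightarrow> bool" where
  "reduced_word [] = True"
| "reduced_word [l] = True"
| "reduced_word (l # m # w) = (m \<noteq> inv_letter l \<and> reduced_word (m # w))"

definition free_group :: "'a set \<Rightarrow> ('a \<times> bool) list monoid" where
  "free_group B =
     \<lparr> carrier = {w. fst ` set w \<subseteq> B \<and> reduced_word w},
       monoid.mult = (\<lambda>u v. free_reduce (u @ v)),
       one = [] \<rparr>"

abbreviation F_infty :: "(nat \<times> bool) list monoid" where
  "F_infty \<equiv> free_group (UNIV :: nat set)"

definition inner_auto :: "('a, 'b) monoid_scheme \<Rightarrow> ('a \<Rightarrow> 'a) set" where
  "inner_auto G = (\<lambda>g. \<lambda>x\<in>carrier G. g \<otimes>\<^bsub>G\<^esub> x \<otimes>\<^bsub>G\<^esub> inv\<^bsub>G\<^esub> g) ` carrier G"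

definition OutGroup :: "('a, 'b) monoid_scheme \<Rightarrow> ('a \<Rightarrow> 'a) set monoid" where
  "OutGroup G = AutoGroup G Mod inner_auto G"

text \<open>Every nontrivial element survives some homomorphism to a finite group.
  Finite target groups are taken with carrier in nat (every finite group is
  isomorphic to such a group).\<close>

definition residually_finite :: "('a, 'b) monoid_scheme \<Rightarrow> bool" where
  "residually_finite G \<longleftrightarrow>
     (\<forall>g\<in>carrier G. g \<noteq> \<one>\<^bsub>G\<^esub> \<longrightarrow>
        (\<exists>(H :: nat monoid) h. group H \<and> finite (carrier H) \<and> h \<in> hom G H \<and> h g \<noteq> \<one>\<^bsub>H\<^esub>))"

definition virtually_solvable :: "('a, 'b) monoid_scheme \<Rightarrow> bool" where
  "virtually_solvable G \<longleftrightarrow>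
     (\<exists>K. subgroup K G \<and> finite (rcosets\<^bsub>G\<^esub> K) \<and> solvable (G\<lparr>carrier := K\<rparr>))"

text \<open>Contains a nonabelian free subgroup, i.e. a subgroup isomorphic to a free
  group whose basis has at least two elements (a nonabelian free group contains
  one of countable rank, so bases in nat suffice).\<close>

definition has_nonabelian_free_subgroup :: "('a, 'b) monoid_scheme \<Rightarrow> bool" where
  "has_nonabelian_free_subgroup G \<longleftrightarrow>
     (\<exists>K (B :: nat set). subgroup K G \<and> (\<exists>x\<in>B. \<exists>y\<in>B. x \<noteq> y)
        \<and> G\<lparr>carrier := K\<rparr> \<cong> free_group B)"

definition tits_alternative :: "('a, 'b) monoid_scheme \<Rightarrow> bool" where
  "tits_alternative G \<longleftrightarrow>
     (\<forall>H. subgroup H G \<longrightarrow>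
        virtually_solvable (G\<lparr>carrier := H\<rparr>) \<or> has_nonabelian_free_subgroup (G\<lparr>carrier := H\<rparr>))"

end

theory Submission
  imports Defs "HOL-Combinatorics.Permutations"
begin


definition push :: "'a \<times> bool \<Rightarrow> ('a \<times> bool) list \<Rightarrow> ('a \<times> bool) list" where
  "push l w = (case w of [] \<Rightarrow> [l] | m # w' \<Rightarrow> (if m = inv_letter l then w' else l # m # w'))"

lemma free_reduce_Cons: "free_reduce (l # w) = push l (free_reduce w)"
  by (simp add: push_def)

declare free_reduce.simps(2)[simp del]
declare free_reduce_Cons[simp]

lemma inv_letter_inv[simp]: "inv_letter (inv_letter l) = l"
  by (simp add: inv_letter_def)

lemma inv_letter_neq[simp]: "inv_letter l \<noteq> l" "l \<noteq> inv_letter l"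
  by (auto simp: inv_letter_def prod_eq_iff)

lemma fst_inv_letter[simp]: "fst (inv_letter l) = fst l"
  by (simp add: inv_letter_def)

lemma reduced_tl: "reduced_word (m # w) \<Longrightarrow> reduced_word w"
  by (cases w) auto

lemma reduced_push: "reduced_word w \<Longrightarrow> reduced_word (push l w)"
  by (cases w) (auto simp: push_def dest: reduced_tl)

lemma reduced_free_reduce: "reduced_word (free_reduce w)"
  by (induction w) (auto simp: free_reduce_Cons reduced_push)

lemma push_reduced: "reduced_word (l # w) \<Longrightarrow> push l w = l # w"
  by (cases w) (auto simp: push_def)

lemma free_reduce_reduced: "reduced_word w \<Longrightarrow> free_reduce w = w"
proof (induction w)
  case (Cons l w)
  then have "reduced_word w" using reduced_tl by blast
  then show ?case using Cons push_reduced by simp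
qed simp

lemma push_inv: "push l (inv_letter l # s) = s"
  by (simp add: push_def)

lemma free_reduce_idem[simp]: "free_reduce (free_reduce w) = free_reduce w"
  by (simp add: free_reduce_reduced reduced_free_reduce)

lemma push_cancel: "reduced_word z \<Longrightarrow> push l (push (inv_letter l) z) = z"
proof (cases z)
  case Nil then show ?thesis by (simp add: push_def)
next
  case (Cons m z')
  assume r: "reduced_word z"
  show ?thesis
  proof (cases "m = l")
    case True
    then show ?thesis using Cons r
      by (cases z') (auto simp: push_def)
  next
    case False
    then show ?thesis using Cons by (auto simp: push_def)
  qed
qed

lemma free_reduce_append: "free_reduce (u @ v) = foldr push u (free_reduce v)"
  by (induction u) (auto simp: free_reduce_Cons)

lemma reduced_foldr_push: "reduced_word r \<Longrightarrow> reduced_word (foldr push s r)"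
  by (induction s) (auto simp: reduced_push)

lemma foldr_push_push:
  assumes "reduced_word s" "reduced_word r"
  shows "foldr push (push l s) r = push l (foldr push s r)"
proof (cases s)
  case Nil then show ?thesis by (simp add: push_def)
next
  case (Cons m s')
  show ?thesis
  proof (cases "m = inv_letter l")
    case True
    have "reduced_word (foldr push s' r)" using assms reduced_foldr_push by blast
    then show ?thesis using Cons True by (simp add: push_inv push_cancel)
  next
    case False
    then show ?thesis using Cons by (simp add: push_def)
  qed
qed

lemma foldr_push_free_reduce:
  "reduced_word r \<Longrightarrow> foldr push (free_reduce u) r = foldr push u r"
  by (induction u) (auto simp: free_reduce_Cons foldr_push_push reduced_free_reduce)

lemma free_reduce_assoc:
  "free_reduce (free_reduce (u @ v) @ w) = free_reduce (u @ free_reduce (v @ w))"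
proof -
  have "free_reduce (free_reduce (u @ v) @ w) = foldr push (free_reduce (u @ v)) (free_reduce w)"
    by (rule free_reduce_append)
  also have "\<dots> = foldr push (u @ v) (free_reduce w)"
    by (rule foldr_push_free_reduce[OF reduced_free_reduce])
  also have "\<dots> = foldr push u (free_reduce (v @ w))"
    by (simp only: foldr_append o_apply free_reduce_append)
  also have "\<dots> = free_reduce (u @ free_reduce (v @ w))"
    by (metis free_reduce_append free_reduce_idem)
  finally show ?thesis .
qed

lemma letters_push: "fst ` set (push l w) \<subseteq> insert (fst l) (fst ` set w)"
  by (cases w) (auto simp: push_def)

lemma letters_free_reduce: "fst ` set (free_reduce w) \<subseteq> fst ` set w"
proof (induction w)
  case (Cons l w)
  have "fst ` set (push l (free_reduce w)) \<subseteq> insert (fst l) (fst ` set w)"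
    using letters_push[of l "free_reduce w"] Cons.IH by blast
  then show ?case by simp
qed simp

lemma free_reduce_inv_cancel:
  "reduced_word r \<Longrightarrow> foldr push (rev (map inv_letter u)) (foldr push u r) = r"
proof (induction u)
  case (Cons l u)
  have "foldr push (rev (map inv_letter (l # u))) (foldr push (l # u) r)
      = foldr push (rev (map inv_letter u)) (push (inv_letter l) (push l (foldr push u r)))"
    by simp
  also have "push (inv_letter l) (push l (foldr push u r)) = foldr push u r"
    using push_cancel[of "foldr push u r" "inv_letter l"] reduced_foldr_push[OF Cons.prems] by simp
  finally show ?case using Cons by simp
qed simp

lemma free_group_carrier: "carrier (free_group B) = {w. fst ` set w \<subseteq> B \<and> reduced_word w}"
  by (simp add: free_group_def)

lemma free_group_mult: "u \<otimes>\<^bsub>free_group B\<^esub> v = free_reduce (u @ v)"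
  by (simp add: free_group_def)

lemma free_group_one: "\<one>\<^bsub>free_group B\<^esub> = []"
  by (simp add: free_group_def)

lemma group_free_group: "group (free_group B)"
proof (rule groupI)
  fix x y assume "x \<in> carrier (free_group B)" "y \<in> carrier (free_group B)"
  then show "x \<otimes>\<^bsub>free_group B\<^esub> y \<in> carrier (free_group B)"
    using letters_free_reduce[of "x @ y"]
    by (simp add: free_group_carrier free_group_mult reduced_free_reduce) blast
next
  show "\<one>\<^bsub>free_group B\<^esub> \<in> carrier (free_group B)"
    by (simp add: free_group_carrier free_group_one)
next
  fix x y z
  show "x \<otimes>\<^bsub>free_group B\<^esub> y \<otimes>\<^bsub>free_group B\<^esub> z =
        x \<otimes>\<^bsub>free_group B\<^esub> (y \<otimes>\<^bsub>free_group B\<^esub> z)"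
    by (simp add: free_group_mult free_reduce_assoc)
next
  fix x assume "x \<in> carrier (free_group B)"
  then show "\<one>\<^bsub>free_group B\<^esub> \<otimes>\<^bsub>free_group B\<^esub> x = x"
    by (simp add: free_group_carrier free_group_mult free_group_one free_reduce_reduced)
next
  fix x assume x: "x \<in> carrier (free_group B)"
  let ?y = "free_reduce (rev (map inv_letter x))"
  have "?y \<in> carrier (free_group B)"
    using x letters_free_reduce[of "rev (map inv_letter x)"]
    by (simp add: free_group_carrier reduced_free_reduce image_image) blast
  moreover have "?y \<otimes>\<^bsub>free_group B\<^esub> x = \<one>\<^bsub>free_group B\<^esub>"
  proof -
    have rx: "reduced_word x" using x by (simp add: free_group_carrier)
    have "free_reduce (?y @ x) = foldr push (rev (map inv_letter x)) (foldr push x [])"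
      using rx by (simp add: free_reduce_append foldr_push_free_reduce free_reduce_reduced
          free_reduce_append[of x "[]", simplified, symmetric])
    also have "\<dots> = []" by (rule free_reduce_inv_cancel) simp
    finally show ?thesis by (simp add: free_group_mult free_group_one)
  qed
  ultimately show "\<exists>y\<in>carrier (free_group B). y \<otimes>\<^bsub>free_group B\<^esub> x = \<one>\<^bsub>free_group B\<^esub>" by blast
qed


lemma AutoGroup_carrier: "carrier (AutoGroup G) = auto G"
  by (simp add: AutoGroup_def)

lemma AutoGroup_mult:
  "x \<in> auto G \<Longrightarrow> y \<in> auto G \<Longrightarrow> x \<otimes>\<^bsub>AutoGroup G\<^esub> y = compose (carrier G) x y"
  by (simp add: AutoGroup_def BijGroup_def auto_def)

lemma AutoGroup_one: "\<one>\<^bsub>AutoGroup G\<^esub> = (\<lambda>x\<in>carrier G. x)"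
  by (simp add: AutoGroup_def BijGroup_def)

context group begin

definition inn :: "'a \<Rightarrow> 'a \<Rightarrow> 'a" where
  "inn g = (\<lambda>x\<in>carrier G. g \<otimes> x \<otimes> inv g)"

lemma inner_auto_eq: "inner_auto G = inn ` carrier G"
  by (simp add: inner_auto_def inn_def)

lemma inv_mult_cancel': "x \<in> carrier G \<Longrightarrow> y \<in> carrier G \<Longrightarrow> inv x \<otimes> (x \<otimes> y) = y"
  by (simp add: m_assoc[symmetric])

lemma mult_inv_cancel': "x \<in> carrier G \<Longrightarrow> y \<in> carrier G \<Longrightarrow> x \<otimes> (inv x \<otimes> y) = y"
  by (simp add: m_assoc[symmetric])

lemma inn_auto: assumes g: "g \<in> carrier G" shows "inn g \<in> auto G"
proof -
  have hom: "inn g \<in> hom G G"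
  proof (rule homI)
    fix x assume "x \<in> carrier G" then show "inn g x \<in> carrier G" using g by (simp add: inn_def)
  next
    fix x y assume x: "x \<in> carrier G" and y: "y \<in> carrier G"
    have "g \<otimes> (x \<otimes> y) \<otimes> inv g = (g \<otimes> x \<otimes> inv g) \<otimes> (g \<otimes> y \<otimes> inv g)"
      using g x y by (simp add: m_assoc inv_mult_cancel')
    then show "inn g (x \<otimes> y) = inn g x \<otimes> inn g y" using x y by (simp add: inn_def)
  qed
  have "bij_betw (inn g) (carrier G) (carrier G)"
  proof (rule bij_betw_byWitness[where f'="\<lambda>x. inv g \<otimes> x \<otimes> g"])
    show "\<forall>a\<in>carrier G. inv g \<otimes> inn g a \<otimes> g = a" using g
      by (simp add: inn_def m_assoc inv_mult_cancel')
    show "\<forall>a\<in>carrier G. inn g (inv g \<otimes> a \<otimes> g) = a" using g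
      by (simp add: inn_def m_assoc mult_inv_cancel')
    show "inn g ` carrier G \<subseteq> carrier G" using g by (auto simp: inn_def)
    show "(\<lambda>x. inv g \<otimes> x \<otimes> g) ` carrier G \<subseteq> carrier G" using g by auto
  qed
  then show ?thesis using hom by (simp add: auto_def Bij_def inn_def)
qed

lemma inn_mult: assumes "g \<in> carrier G" "h \<in> carrier G"
  shows "inn g \<otimes>\<^bsub>AutoGroup G\<^esub> inn h = inn (g \<otimes> h)"
proof -
  have "inn g \<otimes>\<^bsub>AutoGroup G\<^esub> inn h = compose (carrier G) (inn g) (inn h)"
    using assms by (simp add: AutoGroup_mult inn_auto)
  also have "\<dots> = inn (g \<otimes> h)"
    by (rule ext) (use assms in \<open>auto simp: compose_def inn_def inv_mult_group m_assoc\<close>)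
  finally show ?thesis .
qed

lemma inn_one: "inn \<one> = \<one>\<^bsub>AutoGroup G\<^esub>"
  by (rule ext) (auto simp: AutoGroup_one inn_def restrict_def)

lemma inn_inv: assumes g: "g \<in> carrier G"
  shows "inv\<^bsub>AutoGroup G\<^esub> (inn g) = inn (inv g)"
proof -
  interpret A: group "AutoGroup G" by (rule AutoGroup)
  show ?thesis
    using g by (intro A.inv_equality) (simp_all add: inn_mult inn_one AutoGroup_carrier inn_auto)
qed

lemma inn_conj: assumes a: "a \<in> auto G" and g: "g \<in> carrier G"
  shows "a \<otimes>\<^bsub>AutoGroup G\<^esub> inn g \<otimes>\<^bsub>AutoGroup G\<^esub> inv\<^bsub>AutoGroup G\<^esub> a = inn (a g)"
proof -
  interpret A: group "AutoGroup G" by (rule AutoGroup)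
  have ah: "a \<in> hom G G" using a by (simp add: auto_def)
  interpret h: group_hom G G a by (simp add: group_hom_def group_hom_axioms_def ah is_group)
  have ag: "a g \<in> carrier G" using ah g by (simp add: hom_def Pi_def)
  have "a \<otimes>\<^bsub>AutoGroup G\<^esub> inn g = inn (a g) \<otimes>\<^bsub>AutoGroup G\<^esub> a"
  proof -
    have "compose (carrier G) a (inn g) = compose (carrier G) (inn (a g)) a"
    proof (rule ext)
      fix x show "compose (carrier G) a (inn g) x = compose (carrier G) (inn (a g)) a x"
        using g ah by (auto simp: compose_def inn_def h.hom_inv hom_def Pi_def)
    qed
    then show ?thesis using a g ag by (simp add: AutoGroup_mult inn_auto)
  qed
  then have "a \<otimes>\<^bsub>AutoGroup G\<^esub> inn g \<otimes>\<^bsub>AutoGroup G\<^esub> inv\<^bsub>AutoGroup G\<^esub> a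
       = inn (a g) \<otimes>\<^bsub>AutoGroup G\<^esub> a \<otimes>\<^bsub>AutoGroup G\<^esub> inv\<^bsub>AutoGroup G\<^esub> a" by simp
  also have "\<dots> = inn (a g)"
  proof -
    have c1: "inn (a g) \<in> carrier (AutoGroup G)" using ag by (simp add: AutoGroup_carrier inn_auto)
    have c2: "a \<in> carrier (AutoGroup G)" using a by (simp add: AutoGroup_carrier)
    show ?thesis using A.m_assoc[OF c1 c2 A.inv_closed[OF c2]] A.r_inv[OF c2] A.r_one[OF c1] by simp
  qed
  finally show ?thesis .
qed

lemma inner_normal: "inner_auto G \<lhd> AutoGroup G"
proof -
  interpret A: group "AutoGroup G" by (rule AutoGroup)
  have sub: "subgroup (inner_auto G) (AutoGroup G)"
  proof (rule A.subgroupI)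
    show "inner_auto G \<subseteq> carrier (AutoGroup G)"
      by (auto simp: inner_auto_eq AutoGroup_carrier inn_auto)
    show "inner_auto G \<noteq> {}" by (auto simp: inner_auto_eq)
    fix a assume "a \<in> inner_auto G"
    then show "inv\<^bsub>AutoGroup G\<^esub> a \<in> inner_auto G" by (auto simp: inner_auto_eq inn_inv)
  next
    fix a b assume "a \<in> inner_auto G" "b \<in> inner_auto G"
    then show "a \<otimes>\<^bsub>AutoGroup G\<^esub> b \<in> inner_auto G" by (auto simp: inner_auto_eq inn_mult)
  qed
  show ?thesis
    unfolding A.normal_inv_iff
  proof (intro conjI ballI sub)
    fix x h assume "x \<in> carrier (AutoGroup G)" "h \<in> inner_auto G"
    then show "x \<otimes>\<^bsub>AutoGroup G\<^esub> h \<otimes>\<^bsub>AutoGroup G\<^esub> inv\<^bsub>AutoGroup G\<^esub> x \<in> inner_auto G"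
      using inn_conj by (auto simp: inner_auto_eq AutoGroup_carrier auto_def hom_def Pi_def)
  qed
qed

lemma group_OutGroup: "group (OutGroup G)"
  unfolding OutGroup_def by (rule normal.factorgroup_is_group[OF inner_normal])

end

section \<open>Permutation automorphisms of the free group\<close>

definition lm :: "(nat \<Rightarrow> nat) \<Rightarrow> nat \<times> bool \<Rightarrow> nat \<times> bool" where
  "lm \<sigma> l = (\<sigma> (fst l), snd l)"

lemma lm_inv_letter: "lm \<sigma> (inv_letter l) = inv_letter (lm \<sigma> l)"
  by (simp add: lm_def inv_letter_def)

lemma lm_inj: "inj \<sigma> \<Longrightarrow> inj (lm \<sigma>)"
  by (auto simp: inj_def lm_def prod_eq_iff)

lemma lm_eq_inv: "inj \<sigma> \<Longrightarrow> (lm \<sigma> m = inv_letter (lm \<sigma> l)) = (m = inv_letter l)"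
  by (metis lm_inv_letter lm_inj injD)

lemma push_map: "inj \<sigma> \<Longrightarrow> push (lm \<sigma> l) (map (lm \<sigma>) w) = map (lm \<sigma>) (push l w)"
  by (cases w) (auto simp: push_def lm_eq_inv)

lemma free_reduce_map: "inj \<sigma> \<Longrightarrow> free_reduce (map (lm \<sigma>) w) = map (lm \<sigma>) (free_reduce w)"
  by (induction w) (auto simp: push_map)

lemma reduced_map: "inj \<sigma> \<Longrightarrow> reduced_word (map (lm \<sigma>) w) = reduced_word w"
  by (induction w rule: reduced_word.induct) (auto simp: lm_eq_inv)

lemma lm_id[simp]: "lm id = id" by (auto simp: lm_def)

lemma lm_comp: "lm (\<sigma> \<circ> \<tau>) = lm \<sigma> \<circ> lm \<tau>" by (auto simp: lm_def)

lemma F_carrier: "carrier F_infty = {w. reduced_word w}"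
  by (simp add: free_group_carrier)

lemma group_F: "group F_infty" by (rule group_free_group)

definition rhoA :: "(nat \<Rightarrow> nat) \<Rightarrow> (nat \<times> bool) list \<Rightarrow> (nat \<times> bool) list" where
  "rhoA \<sigma> = (\<lambda>w\<in>carrier F_infty. map (lm \<sigma>) w)"

lemma rhoA_auto: assumes b: "bij \<sigma>" shows "rhoA \<sigma> \<in> auto F_infty"
proof -
  have i: "inj \<sigma>" using b bij_is_inj by blast
  have bi: "bij (inv_into UNIV \<sigma>)" using b bij_imp_bij_inv by blast
  have ii: "inj (inv_into UNIV \<sigma>)" using bi bij_is_inj by blast
  have hom: "rhoA \<sigma> \<in> hom F_infty F_infty"
  proof (rule homI)
    fix x assume "x \<in> carrier F_infty" then show "rhoA \<sigma> x \<in> carrier F_infty"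
      using i by (simp add: rhoA_def F_carrier reduced_map)
  next
    fix x y assume "x \<in> carrier F_infty" "y \<in> carrier F_infty"
    then show "rhoA \<sigma> (x \<otimes>\<^bsub>F_infty\<^esub> y) = rhoA \<sigma> x \<otimes>\<^bsub>F_infty\<^esub> rhoA \<sigma> y"
      using i by (simp add: rhoA_def F_carrier free_group_mult reduced_free_reduce)
        (metis free_reduce_map map_append)
  qed
  have inv1: "inv_into UNIV \<sigma> (\<sigma> x) = x" for x using b by (simp add: bij_def inv_f_f)
  have inv2: "\<sigma> (inv_into UNIV \<sigma> x) = x" for x using b by (simp add: bij_def surj_f_inv_f)
  have "bij_betw (rhoA \<sigma>) (carrier F_infty) (carrier F_infty)"
  proof (rule bij_betw_byWitness[where f'="map (lm (inv_into UNIV \<sigma>))"])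
    show "\<forall>a\<in>carrier F_infty. map (lm (inv_into UNIV \<sigma>)) (rhoA \<sigma> a) = a"
      by (auto simp: rhoA_def lm_def inv1 intro!: map_idI)
    show "\<forall>a\<in>carrier F_infty. rhoA \<sigma> (map (lm (inv_into UNIV \<sigma>)) a) = a"
      using ii by (auto simp: rhoA_def lm_def inv2 F_carrier reduced_map intro!: map_idI)
    show "rhoA \<sigma> ` carrier F_infty \<subseteq> carrier F_infty"
      using i by (auto simp: rhoA_def F_carrier reduced_map)
    show "map (lm (inv_into UNIV \<sigma>)) ` carrier F_infty \<subseteq> carrier F_infty"
      using ii by (auto simp: F_carrier reduced_map)
  qed
  then show ?thesis using hom by (simp add: auto_def Bij_def rhoA_def)
qed

lemma rhoA_mult: assumes "bij \<sigma>" "bij \<tau>"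
  shows "rhoA (\<sigma> \<circ> \<tau>) = rhoA \<sigma> \<otimes>\<^bsub>AutoGroup F_infty\<^esub> rhoA \<tau>"
proof -
  have "rhoA (\<sigma> \<circ> \<tau>) = compose (carrier F_infty) (rhoA \<sigma>) (rhoA \<tau>)"
    using rhoA_auto[OF assms(2)]
    by (auto simp: rhoA_def compose_def lm_comp auto_def hom_def Pi_def)
  then show ?thesis using assms by (simp add: AutoGroup_mult rhoA_auto)
qed

lemma rhoA_id: "rhoA id = \<one>\<^bsub>AutoGroup F_infty\<^esub>"
  by (simp add: rhoA_def AutoGroup_one)

lemma rhoA_gen: "rhoA \<sigma> [(x, b)] = [(\<sigma> x, b)]"
  by (simp add: rhoA_def F_carrier lm_def)

lemma rhoA_nontriv: assumes "\<sigma> x \<noteq> x" shows "rhoA \<sigma> \<noteq> \<one>\<^bsub>AutoGroup F_infty\<^esub>"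
proof
  assume "rhoA \<sigma> = \<one>\<^bsub>AutoGroup F_infty\<^esub>"
  then have "rhoA \<sigma> [(x, False)] = [(x, False)]" by (simp add: AutoGroup_one F_carrier)
  then show False using assms by (simp add: rhoA_gen)
qed

section \<open>Exponent sums\<close>

definition es :: "nat \<Rightarrow> (nat \<times> bool) list \<Rightarrow> int" where
  "es x w = sum_list (map (\<lambda>l. if fst l = x then (if snd l then -1 else 1) else 0) w)"

definition esl :: "nat \<Rightarrow> nat \<times> bool \<Rightarrow> int" where
  "esl x l = (if fst l = x then (if snd l then -1 else 1) else 0)"

lemma es_simps[simp]: "es x [] = 0" "es x (l # w) = esl x l + es x w" "es x (u @ v) = es x u + es x v"
  by (simp_all add: es_def esl_def)

lemma esl_inv_letter: "esl x (inv_letter l) = - esl x l"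
  by (simp add: esl_def inv_letter_def)

lemma es_push: "es x (push l w) = esl x l + es x w"
proof (cases w)
  case (Cons m w')
  then show ?thesis
    using esl_inv_letter[of x l] by (auto simp: push_def)
qed (simp add: push_def)

lemma es_free_reduce: "es x (free_reduce w) = es x w"
  by (induction w) (simp_all add: es_push)

lemma es_mult: "es x (u \<otimes>\<^bsub>F_infty\<^esub> v) = es x u + es x v"
  by (simp add: free_group_mult es_free_reduce)

lemma es_inv: assumes "g \<in> carrier F_infty" shows "es x (inv\<^bsub>F_infty\<^esub> g) = - es x g"
proof -
  interpret F: group F_infty by (rule group_F)
  have "inv\<^bsub>F_infty\<^esub> g \<otimes>\<^bsub>F_infty\<^esub> g = \<one>\<^bsub>F_infty\<^esub>" using assms by simp
  then have "inv\<^bsub>F_infty\<^esub> g \<otimes>\<^bsub>F_infty\<^esub> g = []" by (simp add: free_group_one)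
  then have "es x (inv\<^bsub>F_infty\<^esub> g) + es x g = 0" by (metis es_mult es_simps(1))
  then show ?thesis by simp
qed

lemma rhoA_not_inner: assumes "\<sigma> x \<noteq> x" shows "rhoA \<sigma> \<notin> inner_auto F_infty"
proof
  interpret F: group F_infty by (rule group_F)
  assume "rhoA \<sigma> \<in> inner_auto F_infty"
  then obtain g where g: "g \<in> carrier F_infty" and e: "rhoA \<sigma> = F.inn g"
    by (auto simp: F.inner_auto_eq)
  have w: "[(x, False)] \<in> carrier F_infty" by (simp add: F_carrier)
  have "es x (rhoA \<sigma> [(x, False)]) = 0" using assms by (simp add: rhoA_gen esl_def)
  moreover have "es x (F.inn g [(x, False)]) = 1"
  proof -
    have "F.inn g [(x, False)] = g \<otimes>\<^bsub>F_infty\<^esub> [(x, False)] \<otimes>\<^bsub>F_infty\<^esub> inv\<^bsub>F_infty\<^esub> g"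
      using w by (simp add: F.inn_def)
    then show ?thesis using g by (simp only: es_mult es_inv) (simp add: esl_def)
  qed
  ultimately show False using e by simp
qed


definition t5 :: "(nat \<Rightarrow> nat) \<Rightarrow> bool" where
  "t5 t \<longleftrightarrow> (\<forall>p<5. t p < 5)"

definition D :: "nat set \<Rightarrow> nat \<Rightarrow> (nat \<Rightarrow> nat) \<Rightarrow> nat \<Rightarrow> nat" where
  "D A L t n = (if n div 5 div L \<in> A then 5 * (n div 5) + t (n mod 5) else n)"

definition Xp :: "nat set \<Rightarrow> nat \<Rightarrow> (nat \<Rightarrow> nat) \<Rightarrow> nat \<Rightarrow> nat" where
  "Xp A L t n = (if n div 5 div L \<in> A then
       (if Suc (n div 5 mod L) < L then n + 5 else 5 * (L * (n div 5 div L)) + t (n mod 5)) else n)"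

lemma aux5: "p < 5 \<Longrightarrow> (5 * k + p) div 5 = (k::nat)" "p < 5 \<Longrightarrow> (5 * k + p) mod 5 = (p::nat)"
  by presburger+

lemma divs: fixes L a b p :: nat assumes "0 < L" "b < L" "p < 5"
  shows "(5 * (L * a + b) + p) div 5 = L * a + b" "(5 * (L * a + b) + p) mod 5 = p"
    "(L * a + b) div L = a" "(L * a + b) mod L = b"
proof -
  show "(5 * (L * a + b) + p) div 5 = L * a + b" by (rule aux5(1)[OF assms(3)])
  show "(5 * (L * a + b) + p) mod 5 = p" by (rule aux5(2)[OF assms(3)])
  show "(L * a + b) div L = a" "(L * a + b) mod L = b" using assms by auto
qed

lemma D_comp: assumes "t5 t2"
  shows "D A L (t1 \<circ> t2) = D A L t1 \<circ> D A L t2"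
proof
  fix n
  have m: "(n::nat) mod 5 < 5" by simp
  then have "t2 (n mod 5) < 5" using assms by (simp add: t5_def)
  then show "D A L (t1 \<circ> t2) n = (D A L t1 \<circ> D A L t2) n"
    by (simp add: D_def)
qed

lemma D_id: assumes "\<forall>p<5. t p = p" shows "D A L t = id"
proof
  fix n
  have "(n::nat) mod 5 < 5" by simp
  then show "D A L t n = id n" using assms by (simp add: D_def)
qed

lemma D_UNIV: "D UNIV L t = D UNIV 1 t"
  by (simp add: D_def fun_eq_iff)

lemma X_step: assumes "0 < L" "b < L" "p < 5" "a \<in> A"
  shows "Xp A L t (5 * (L * a + b) + p) =
     (if Suc b < L then 5 * (L * a + Suc b) + p else 5 * (L * a + 0) + t p)"
  unfolding Xp_def divs[OF assms(1-3)] using assms by simp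

lemma X_pow: assumes L: "0 < L" and b: "b < L" and p: "p < 5" and a: "a \<in> A" and t: "t5 t"
  and i: "i \<le> L"
  shows "(Xp A L t ^^ i) (5 * (L * a + b) + p) =
     (if b + i < L then 5 * (L * a + (b + i)) + p else 5 * (L * a + (b + i - L)) + t p)"
  using i
proof (induction i)
  case 0 then show ?case using b by simp
next
  case (Suc i)
  have tp: "t p < 5" using t p by (simp add: t5_def)
  show ?case
  proof (cases "b + i < L")
    case True
    then have "(Xp A L t ^^ Suc i) (5 * (L * a + b) + p) = Xp A L t (5 * (L * a + (b + i)) + p)"
      using Suc by simp
    also have "\<dots> = (if Suc (b + i) < L then 5 * (L * a + Suc (b + i)) + p else 5 * (L * a + 0) + t p)"
      by (rule X_step[OF L True p a])
    finally show ?thesis using True by auto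
  next
    case False
    have bb: "b + i - L < L" using Suc.prems b False by linarith
    have bb2: "Suc (b + i - L) < L" using Suc.prems b False by linarith
    have "(Xp A L t ^^ Suc i) (5 * (L * a + b) + p) = Xp A L t (5 * (L * a + (b + i - L)) + t p)"
      using Suc False by simp
    also have "\<dots> = (if Suc (b + i - L) < L then 5 * (L * a + Suc (b + i - L)) + t p else 5 * (L * a + 0) + t (t p))"
      by (rule X_step[OF L bb tp a])
    also have "\<dots> = 5 * (L * a + (b + Suc i - L)) + t p"
      using Suc.prems b False bb2 by (simp add: Suc_diff_le)
    finally show ?thesis using False by simp
  qed
qed

lemma X_pow_out: assumes "n div 5 div L \<notin> A" shows "(Xp A L t ^^ i) n = n"
  by (induction i) (simp_all add: Xp_def assms)

lemma X_pow_L: assumes L: "0 < L" and t: "t5 t" shows "Xp A L t ^^ L = D A L t"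
proof
  fix n
  show "(Xp A L t ^^ L) n = D A L t n"
  proof (cases "n div 5 div L \<in> A")
    case True
    let ?a = "n div 5 div L" and ?b = "n div 5 mod L" and ?p = "n mod 5"
    have n: "n = 5 * (L * ?a + ?b) + ?p" using L by simp
    have "(Xp A L t ^^ L) (5 * (L * ?a + ?b) + ?p) = 5 * (L * ?a + ?b) + t ?p"
      using X_pow[OF L _ _ True t, of ?b ?p L] L by simp
    then show ?thesis using n True by (simp add: D_def)
  next
    case False
    then show ?thesis by (simp add: X_pow_out D_def)
  qed
qed

lemma funpow_id_bij: assumes "f ^^ Suc k = id" shows "bij f"
proof -
  have "f \<circ> f ^^ k = id" by (metis funpow.simps(2) assms)
  moreover have "f ^^ k \<circ> f = id" using assms by (metis funpow_Suc_right)
  ultimately show ?thesis by (metis o_bij)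
qed

lemma D_cube: assumes t: "t5 t" and c: "\<forall>p<5. t (t (t p)) = p"
  shows "D A L t ^^ 3 = id"
proof -
  have t2: "t5 (t \<circ> t)" using t by (simp add: t5_def)
  have "D A L t ^^ 3 = D A L t \<circ> (D A L t \<circ> D A L t)" by (simp add: numeral_3_eq_3)
  also have "\<dots> = D A L (t \<circ> (t \<circ> t))" using t t2 by (simp add: D_comp)
  also have "\<dots> = id" using c by (intro D_id) simp
  finally show ?thesis .
qed

lemma X_pow_3L: assumes L: "0 < L" and t: "t5 t" and c: "\<forall>p<5. t (t (t p)) = p"
  shows "Xp A L t ^^ (L * 3) = id"
  by (simp add: funpow_mult[symmetric] X_pow_L[OF L t] D_cube[OF t c])

lemma D_bij: assumes t: "t5 t" and c: "\<forall>p<5. t (t (t p)) = p" shows "bij (D A L t)"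
  using D_cube[OF t c] by (intro funpow_id_bij[where f="D A L t" and k=2]) (simp add: numeral_3_eq_3)

lemma X_bij: assumes L: "0 < L" and t: "t5 t" and c: "\<forall>p<5. t (t (t p)) = p"
  shows "bij (Xp A L t)"
proof -
  have "L * 3 = Suc (L * 3 - 1)" using L by simp
  then show ?thesis using X_pow_3L[OF L t c] funpow_id_bij by metis
qed

lemma D_supp: assumes L: "0 < L" shows "{n. D {0} L t n \<noteq> n} \<subseteq> {..<5 * L}"
proof
  fix n assume "n \<in> {n. D {0} L t n \<noteq> n}"
  then have "n div 5 div L = 0" by (auto simp: D_def split: if_splits)
  then show "n \<in> {..<5 * L}" using L by (auto simp: div_eq_0_iff)
qed

lemma X_supp: assumes L: "0 < L" shows "{n. Xp {0} L t n \<noteq> n} \<subseteq> {..<5 * L}"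
proof
  fix n assume "n \<in> {n. Xp {0} L t n \<noteq> n}"
  then have "n div 5 div L = 0" by (auto simp: Xp_def split: if_splits)
  then show "n \<in> {..<5 * L}" using L by (auto simp: div_eq_0_iff)
qed

lemma D_moves: assumes "p < 5" "t p \<noteq> p" "0 \<in> A" shows "D A L t p \<noteq> p"
  using assms by (simp add: D_def)

section \<open>Concrete 3-cycles\<close>

definition tp :: "nat list \<Rightarrow> nat \<Rightarrow> nat" where
  "tp xs p = (if p < 5 then xs ! p else p)"

definition Tl :: "nat list list" where
  "Tl = [[0,1,3,4,2],[0,2,3,1,4],[1,3,2,0,4],[2,0,1,3,4],[2,1,4,3,0],[4,1,2,0,3]]"

lemma less5: "p < (5::nat) \<Longrightarrow> p = 0 \<or> p = 1 \<or> p = 2 \<or> p = 3 \<or> p = 4" by auto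

lemma Tl_t5: "xs \<in> set Tl \<Longrightarrow> t5 (tp xs)"
  unfolding t5_def tp_def Tl_def by (auto dest!: less5)

lemma Tl_cube: "xs \<in> set Tl \<Longrightarrow> \<forall>p<5. tp xs (tp xs (tp xs p)) = p"
  unfolding tp_def Tl_def by (auto dest!: less5)

lemma Tl_nontriv: "tp (Tl ! 0) 2 \<noteq> 2"
  by (simp add: tp_def Tl_def)

definition cm :: "(nat \<Rightarrow> nat) \<Rightarrow> (nat \<Rightarrow> nat) \<Rightarrow> nat \<Rightarrow> nat" where
  "cm a b = a \<circ> b \<circ> (a \<circ> a) \<circ> (b \<circ> b)"

lemma tp_eqI: "(\<And>p. p < 5 \<Longrightarrow> f p = g p) \<Longrightarrow> (\<And>p. \<not> p < (5::nat) \<Longrightarrow> f p = g p) \<Longrightarrow> f = g"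
  by (rule ext) (metis)


lemma Tl_comm: "xs \<in> set Tl \<Longrightarrow> \<exists>a\<in>set Tl. \<exists>b\<in>set Tl. tp xs = cm (tp a) (tp b)"
proof -
  have e0: "tp (Tl!0) = cm (tp (Tl!1)) (tp (Tl!4))"
    by (rule tp_eqI, (drule less5, elim disjE; simp add: tp_def Tl_def cm_def), simp add: tp_def cm_def)
  have e1: "tp (Tl!1) = cm (tp (Tl!0)) (tp (Tl!3))"
    by (rule tp_eqI, (drule less5, elim disjE; simp add: tp_def Tl_def cm_def), simp add: tp_def cm_def)
  have e2: "tp (Tl!2) = cm (tp (Tl!5)) (tp (Tl!1))"
    by (rule tp_eqI, (drule less5, elim disjE; simp add: tp_def Tl_def cm_def), simp add: tp_def cm_def)
  have e3: "tp (Tl!3) = cm (tp (Tl!4)) (tp (Tl!2))"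
    by (rule tp_eqI, (drule less5, elim disjE; simp add: tp_def Tl_def cm_def), simp add: tp_def cm_def)
  have e4: "tp (Tl!4) = cm (tp (Tl!3)) (tp (Tl!5))"
    by (rule tp_eqI, (drule less5, elim disjE; simp add: tp_def Tl_def cm_def), simp add: tp_def cm_def)
  have e5: "tp (Tl!5) = cm (tp (Tl!2)) (tp (Tl!0))"
    by (rule tp_eqI, (drule less5, elim disjE; simp add: tp_def Tl_def cm_def), simp add: tp_def cm_def)
  have m: "Tl!0 \<in> set Tl" "Tl!1 \<in> set Tl" "Tl!2 \<in> set Tl" "Tl!3 \<in> set Tl" "Tl!4 \<in> set Tl" "Tl!5 \<in> set Tl"
    by (simp_all add: Tl_def)
  assume "xs \<in> set Tl"
  then have "xs = Tl!0 \<or> xs = Tl!1 \<or> xs = Tl!2 \<or> xs = Tl!3 \<or> xs = Tl!4 \<or> xs = Tl!5"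
    by (simp add: Tl_def)
  then show ?thesis using e0 e1 e2 e3 e4 e5 m by blast
qed


lemma dvd_pow3: fixes d :: nat assumes "d dvd 3 ^ Suc k" "d < 3 ^ Suc k" shows "d dvd 3 ^ k"
proof -
  have e3: "{2..<3::nat} = {2}" by auto
  have pr: "Factorial_Ring.prime (3::nat)" unfolding prime_nat_iff' e3 by simp
  obtain i where i: "i \<le> Suc k" "d = 3 ^ i"
    using assms(1) divides_primepow_nat[OF pr, of d "Suc k"] by auto
  have "i \<noteq> Suc k" using assms(2) i by auto
  then have "i < Suc k" using i by simp
  then show ?thesis using i by (simp add: le_imp_power_dvd)
qed

lemma lt_pow3: "(n::nat) < 3 ^ n"
proof -
  have "n < 2 ^ n" by (rule less_exp)
  also have "(2::nat) ^ n \<le> 3 ^ n" by (rule power_mono) auto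
  finally show ?thesis .
qed

lemma (in group) sub_pow_closed: "subgroup K G \<Longrightarrow> h \<in> K \<Longrightarrow> h [^] (n::nat) \<in> K"
  by (induction n) (auto simp: subgroup.one_closed subgroup.m_closed)

lemma (in group) not_RF:
  assumes c: "c \<in> carrier G" "c \<noteq> \<one>"
    and x: "\<And>k. \<exists>x\<in>carrier G. x [^] (3 ^ Suc k :: nat) = \<one> \<and> x [^] (3 ^ k :: nat) = c"
  shows "\<not> residually_finite G"
proof
  assume "residually_finite G"
  then obtain H :: "nat monoid" and h where H: "group H" "finite (carrier H)" "h \<in> hom G H"
      and hc: "h c \<noteq> \<one>\<^bsub>H\<^esub>"
    using c unfolding residually_finite_def by blast
  interpret H: group H by (rule H(1))
  interpret gh: group_hom G H h by (simp add: group_hom_def group_hom_axioms_def H is_group)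
  let ?r = "order H"
  obtain y where y: "y \<in> carrier G" "y [^] (3 ^ Suc ?r :: nat) = \<one>" "y [^] (3 ^ ?r :: nat) = c"
    using x by blast
  have hy: "h y \<in> carrier H" using y by simp
  have "h y [^]\<^bsub>H\<^esub> (3 ^ Suc ?r :: nat) = \<one>\<^bsub>H\<^esub>"
    using y gh.hom_nat_pow[of y "3 ^ Suc ?r"] by simp
  then have d1: "H.ord (h y) dvd 3 ^ Suc ?r" using H.pow_eq_id[OF hy] by simp
  have d2: "H.ord (h y) \<le> ?r" by (rule H.ord_le_group_order[OF H(2) hy])
  have "?r < 3 ^ ?r" by (rule lt_pow3)
  then have "H.ord (h y) < 3 ^ Suc ?r" using d2 by simp
  then have "H.ord (h y) dvd 3 ^ ?r" using d1 dvd_pow3 by blast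
  then have "h y [^]\<^bsub>H\<^esub> (3 ^ ?r :: nat) = \<one>\<^bsub>H\<^esub>" using H.pow_eq_id[OF hy] by simp
  then have "h c = \<one>\<^bsub>H\<^esub>" using y gh.hom_nat_pow[of y "3 ^ ?r"] by simp
  then show False using hc by simp
qed

lemma fr_replicate: "free_reduce (replicate n l @ [l]) = replicate (Suc n) l"
  by (induction n) (auto simp: push_def)

lemma (in group) torsion_no_free:
  assumes tor: "\<And>g. g \<in> carrier G \<Longrightarrow> \<exists>n>0. g [^] (n::nat) = \<one>"
  shows "\<not> has_nonabelian_free_subgroup G"
proof
  assume "has_nonabelian_free_subgroup G"
  then obtain K and B :: "nat set" and x where K: "subgroup K G" and x: "x \<in> B"
    and iso: "G\<lparr>carrier := K\<rparr> \<cong> free_group B"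
    unfolding has_nonabelian_free_subgroup_def by blast
  then obtain \<phi> where \<phi>: "\<phi> \<in> iso (G\<lparr>carrier := K\<rparr>) (free_group B)"
    by (auto simp: is_iso_def)
  let ?l = "(x, False)"
  have w: "[?l] \<in> carrier (free_group B)" using x by (simp add: free_group_carrier)
  have bij: "bij_betw \<phi> K (carrier (free_group B))" using \<phi> by (simp add: iso_def)
  have hom: "\<And>a b. a \<in> K \<Longrightarrow> b \<in> K \<Longrightarrow> \<phi> (a \<otimes> b) = free_reduce (\<phi> a @ \<phi> b)"
    using \<phi> by (simp add: iso_def hom_def free_group_mult)
  obtain g where g: "g \<in> K" "\<phi> g = [?l]"
    using bij w by (metis bij_betw_imp_surj_on imageE)
  have gc: "g \<in> carrier G" using K g subgroup.subset by blast
  obtain n :: nat where n: "n > 0" "g [^] n = \<one>" using tor[OF gc] by blast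
  have P: "\<phi> (g [^] Suc m) = replicate (Suc m) ?l" for m
  proof (induction m)
    case 0 then show ?case using gc g by simp
  next
    case (Suc m)
    have e: "g [^] Suc (Suc m) = g [^] Suc m \<otimes> g" by (rule nat_pow_Suc)
    have "\<phi> (g [^] Suc (Suc m)) = free_reduce (\<phi> (g [^] Suc m) @ \<phi> g)"
      unfolding e by (rule hom[OF sub_pow_closed[OF K g(1)] g(1)])
    then show ?case by (simp only: Suc.IH g(2) fr_replicate)
  qed
  have "g [^] Suc n = g" using n gc by simp
  then have "replicate (Suc n) ?l = [?l]" using P[of n] g by simp
  then show False using n by simp
qed

lemma (in group) pigeon_coset:
  assumes K: "subgroup K G" and fin: "finite (rcosets K)" and x: "x \<in> carrier G"
  shows "\<exists>j>0. j \<le> card (rcosets K) \<and> x [^] (j::nat) \<in> K"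
proof -
  let ?m = "card (rcosets K)"
  let ?f = "\<lambda>i::nat. K #> x [^] i"
  have sub: "?f ` {0..?m} \<subseteq> rcosets K" using K x by (auto intro!: rcosetsI subgroup.subset)
  have "\<not> inj_on ?f {0..?m}"
  proof
    assume "inj_on ?f {0..?m}"
    then have "card {0..?m} \<le> ?m" using card_inj_on_le[OF _ sub fin] by blast
    then show False by simp
  qed
  then obtain i l where il: "i \<in> {0..?m}" "l \<in> {0..?m}" "i \<noteq> l" "?f i = ?f l"
    unfolding inj_on_def by blast
  have main: "x [^] (b - a) \<in> K" if "a < b" "K #> x [^] a = K #> x [^] b" for a b :: nat
  proof -
    have "x [^] b \<in> K #> x [^] a" using that(2) rcos_self[OF _ K, of "x [^] b"] x by simp
    then have "x [^] b \<otimes> inv (x [^] a) \<in> K"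
      using subgroup.rcos_module_imp[OF K is_group, of "x [^] a" "x [^] b"] x by simp
    moreover have "x [^] b = x [^] (b - a) \<otimes> x [^] a" using that(1) x by (simp add: nat_pow_mult)
    ultimately show ?thesis using x by (simp add: m_assoc)
  qed
  show ?thesis
  proof (cases "i < l")
    case True
    then show ?thesis using main[of i l] il by (intro exI[of _ "l - i"]) auto
  next
    case False
    then have "l < i" using il by simp
    then show ?thesis using main[of l i] il by (intro exI[of _ "i - l"]) auto
  qed
qed

lemma (in group) pow3_in_sub:
  fixes j :: nat
  assumes K: "subgroup K G" and x: "x \<in> carrier G" and xj: "x [^] j \<in> K" and j: "0 < j" "j < 3 ^ Suc k"
    and x3: "x [^] (3 ^ Suc k :: nat) = \<one>"
  shows "x [^] (3 ^ k :: nat) \<in> K"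
proof -
  let ?g = "gcd j (3 ^ Suc k)"
  have "?g \<le> j" using j by (simp add: gcd_le1_nat)
  then have lt: "?g < 3 ^ Suc k" using j(2) by linarith
  have "?g dvd 3 ^ k" by (rule dvd_pow3[OF gcd_dvd2 lt])
  then obtain c where c: "3 ^ k = ?g * c" by blast
  obtain u v where uv: "j * u = 3 ^ Suc k * v + ?g" using bezout_nat[of j "3 ^ Suc k"] j by auto
  have "(x [^] j) [^] (u * c) \<in> K" using sub_pow_closed[OF K xj] .
  moreover have "(x [^] j) [^] (u * c) = x [^] (3 ^ k :: nat)"
  proof -
    have "j * (u * c) = 3 ^ Suc k * (v * c) + 3 ^ k" using uv c
      by (metis add_mult_distrib mult.assoc)
    then have "(x [^] j) [^] (u * c) = (x [^] (3 ^ Suc k :: nat)) [^] (v * c) \<otimes> x [^] (3 ^ k :: nat)"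
      using x by (simp add: nat_pow_pow nat_pow_mult)
    then show ?thesis using x3 x by simp
  qed
  ultimately show ?thesis by simp
qed

lemma (in group) not_vsolv:
  assumes key: "\<And>N::nat. \<exists>S\<subseteq>carrier G. (\<exists>s\<in>S. s \<noteq> \<one>) \<and>
     (\<forall>s\<in>S. \<exists>a\<in>S. \<exists>b\<in>S. s = a \<otimes> b \<otimes> inv a \<otimes> inv b) \<and>
     (\<forall>s\<in>S. \<exists>x\<in>carrier G. \<exists>k. N < 3 ^ Suc k \<and> x [^] (3 ^ Suc k :: nat) = \<one> \<and> x [^] (3 ^ k :: nat) = s)"
  shows "\<not> virtually_solvable G"
proof
  assume "virtually_solvable G"
  then obtain K where K: "subgroup K G" and fin: "finite (rcosets K)"
    and sol: "solvable (G\<lparr>carrier := K\<rparr>)"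
    unfolding virtually_solvable_def by blast
  obtain S where S: "S \<subseteq> carrier G" "\<exists>s\<in>S. s \<noteq> \<one>"
    "\<forall>s\<in>S. \<exists>a\<in>S. \<exists>b\<in>S. s = a \<otimes> b \<otimes> inv a \<otimes> inv b"
    "\<forall>s\<in>S. \<exists>x\<in>carrier G. \<exists>k. card (rcosets K) < 3 ^ Suc k \<and> x [^] (3 ^ Suc k :: nat) = \<one> \<and> x [^] (3 ^ k :: nat) = s"
    using key[of "card (rcosets K)"] by blast
  have SK: "S \<subseteq> K"
  proof
    fix s assume "s \<in> S"
    then obtain x k where x: "x \<in> carrier G" "card (rcosets K) < 3 ^ Suc k"
      "x [^] (3 ^ Suc k :: nat) = \<one>" "x [^] (3 ^ k :: nat) = s" using S(4) by blast
    obtain j :: nat where j: "j > 0" "j \<le> card (rcosets K)" "x [^] j \<in> K"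
      using pigeon_coset[OF K fin x(1)] by blast
    show "s \<in> K" using pow3_in_sub[OF K x(1) j(3) j(1) _ x(3)] j(2) x(2,4) by simp
  qed
  interpret Kg: group "G\<lparr>carrier := K\<rparr>" by (rule subgroup.subgroup_is_group[OF K is_group])
  obtain n where n: "(derived (G\<lparr>carrier := K\<rparr>) ^^ n) (carrier (G\<lparr>carrier := K\<rparr>)) = {\<one>}"
    using sol Kg.solvable_iff_trivial_derived_seq by auto
  have "S \<subseteq> (derived (G\<lparr>carrier := K\<rparr>) ^^ m) K" for m
  proof (induction m)
    case 0 then show ?case using SK by simp
  next
    case (Suc m)
    show ?case
    proof
      fix s assume s: "s \<in> S"
      then obtain a b where ab: "a \<in> S" "b \<in> S" "s = a \<otimes> b \<otimes> inv a \<otimes> inv b" using S(3) by blast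
      have aK: "a \<in> K" "b \<in> K" using ab SK by auto
      have "s = a \<otimes>\<^bsub>G\<lparr>carrier := K\<rparr>\<^esub> b \<otimes>\<^bsub>G\<lparr>carrier := K\<rparr>\<^esub> inv\<^bsub>G\<lparr>carrier := K\<rparr>\<^esub> a
          \<otimes>\<^bsub>G\<lparr>carrier := K\<rparr>\<^esub> inv\<^bsub>G\<lparr>carrier := K\<rparr>\<^esub> b"
        using ab(3) aK K by simp
      then have "s \<in> derived_set (G\<lparr>carrier := K\<rparr>) ((derived (G\<lparr>carrier := K\<rparr>) ^^ m) K)"
        using ab Suc.IH by blast
      then show "s \<in> (derived (G\<lparr>carrier := K\<rparr>) ^^ Suc m) K"
        by (simp add: derived_def generate.incl)
    qed
  qed
  then have "S \<subseteq> (derived (G\<lparr>carrier := K\<rparr>) ^^ n) K" by blast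
  then have "S \<subseteq> {\<one>}" using n by simp
  then show False using S(2) by auto
qed


lemma perm_torsion:
  assumes S: "finite S" and p: "\<sigma> permutes S"
  shows "\<exists>n>0. \<sigma> ^^ n = id"
proof -
  have all: "(\<sigma> ^^ i) permutes S" for i
  proof (induction i)
    case 0 show ?case by (simp only: funpow.simps(1) permutes_id)
  next
    case (Suc i) show ?case by (simp only: funpow.simps(2) permutes_compose[OF Suc.IH p])
  qed
  have "range (\<lambda>i::nat. \<sigma> ^^ i) \<subseteq> {p. p permutes S}" using all by auto
  then have fin: "finite (range (\<lambda>i::nat. \<sigma> ^^ i))"
    using finite_permutations[OF S] finite_subset by blast
  have "\<not> inj (\<lambda>i::nat. \<sigma> ^^ i)"
  proof
    assume "inj (\<lambda>i::nat. \<sigma> ^^ i)"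
    then have "finite (UNIV :: nat set)" using finite_imageD[OF fin] by blast
    then show False by simp
  qed
  then obtain i j :: nat where ij: "i \<noteq> j" "\<sigma> ^^ i = \<sigma> ^^ j" unfolding inj_def by blast
  have main: "\<sigma> ^^ (b - a) = id" if "a < b" "\<sigma> ^^ a = \<sigma> ^^ b" for a b
  proof
    fix x
    have "bij (\<sigma> ^^ a)" using all permutes_bij by blast
    then obtain y where y: "x = (\<sigma> ^^ a) y" by (metis bij_pointE)
    have "\<sigma> ^^ b = \<sigma> ^^ (b - a) \<circ> \<sigma> ^^ a" using that(1) by (simp add: funpow_add[symmetric])
    then have "(\<sigma> ^^ (b - a)) ((\<sigma> ^^ a) y) = (\<sigma> ^^ b) y" by simp
    then show "(\<sigma> ^^ (b - a)) x = id x" using y that(2) by simp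
  qed
  show ?thesis
  proof (cases "i < j")
    case True then show ?thesis using main[of i j] ij by (intro exI[of _ "j - i"]) auto
  next
    case False then have "j < i" using ij by simp
    then show ?thesis using main[of j i] ij by (intro exI[of _ "i - j"]) auto
  qed
qed

lemma bij_supp_permutes: "bij f \<Longrightarrow> {n. f n \<noteq> n} \<subseteq> S \<Longrightarrow> f permutes S"
  unfolding permutes_def by (auto simp: bij_iff)

lemma t5_comp: "t5 a \<Longrightarrow> t5 b \<Longrightarrow> t5 (a \<circ> b)" by (simp add: t5_def)

lemma D_cm: assumes "t5 a" "t5 b"
  shows "D A L (cm a b) = D A L a \<circ> D A L b \<circ> (D A L a \<circ> D A L a) \<circ> (D A L b \<circ> D A L b)"
  using assms by (simp add: cm_def D_comp t5_comp o_assoc)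

lemma D_cube3: assumes t: "t5 t" and c: "\<forall>p<5. t (t (t p)) = p"
  shows "D A L t \<circ> D A L t \<circ> D A L t = id"
proof -
  have "D A L t \<circ> D A L t \<circ> D A L t = D A L (t \<circ> t \<circ> t)" using t by (simp add: D_comp t5_comp)
  also have "\<dots> = id" using c by (intro D_id) simp
  finally show ?thesis .
qed

lemma Tl0: "Tl ! 0 \<in> set Tl" by (simp add: Tl_def)

locale perm_rep = group G for G (structure) +
  fixes \<rho> :: "(nat \<Rightarrow> nat) \<Rightarrow> 'a"
  assumes rho_closed: "bij \<sigma> \<Longrightarrow> \<rho> \<sigma> \<in> carrier G"
    and rho_mult: "bij \<sigma> \<Longrightarrow> bij \<tau> \<Longrightarrow> \<rho> (\<sigma> \<circ> \<tau>) = \<rho> \<sigma> \<otimes> \<rho> \<tau>"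
    and rho_id: "\<rho> id = \<one>"
    and rho_faithful: "bij \<sigma> \<Longrightarrow> \<sigma> x \<noteq> x \<Longrightarrow> \<rho> \<sigma> \<noteq> \<one>"
begin

lemma rho_pow: "bij \<sigma> \<Longrightarrow> \<rho> (\<sigma> ^^ n) = \<rho> \<sigma> [^] n"
proof (induction n)
  case 0 then show ?case by (simp only: funpow.simps(1) rho_id nat_pow_0)
next
  case (Suc n)
  have "\<rho> (\<sigma> ^^ Suc n) = \<rho> (\<sigma> \<circ> \<sigma> ^^ n)" by simp
  also have "\<dots> = \<rho> \<sigma> \<otimes> \<rho> (\<sigma> ^^ n)" using Suc.prems by (simp add: rho_mult)
  also have "\<dots> = \<rho> \<sigma> [^] Suc n" by (metis Suc rho_closed nat_pow_Suc2)
  finally show ?case .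
qed

lemma rho_inv_eq: assumes "bij \<sigma>" "bij \<tau>" "\<tau> \<circ> \<sigma> = id" shows "inv (\<rho> \<sigma>) = \<rho> \<tau>"
  using assms by (intro inv_equality) (simp_all add: rho_mult[symmetric] rho_id rho_closed)

lemma notRF: "\<not> residually_finite G"
proof -
  let ?t = "tp (Tl ! 0)"
  have t5: "t5 ?t" and cb: "\<forall>p<5. ?t (?t (?t p)) = p" using Tl_t5[OF Tl0] Tl_cube[OF Tl0] by auto
  let ?c = "\<rho> (D UNIV 1 ?t)"
  show ?thesis
  proof (rule not_RF)
    show "?c \<in> carrier G" using D_bij[OF t5 cb] rho_closed by blast
    show "?c \<noteq> \<one>"
      using rho_faithful[OF D_bij[OF t5 cb, of UNIV 1], of 2] D_moves[where p=2 and t="?t" and A=UNIV and L=1] Tl_nontriv by simp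
    fix k
    let ?L = "3 ^ k :: nat"
    have L: "0 < ?L" by simp
    have bX: "bij (Xp UNIV ?L ?t)" by (rule X_bij[OF L t5 cb])
    have e1: "\<rho> (Xp UNIV ?L ?t) [^] (3 ^ Suc k :: nat) = \<one>"
      using X_pow_3L[OF L t5 cb, of UNIV] rho_pow[OF bX, of "3 ^ Suc k"] rho_id
      by (simp add: mult.commute)
    have e2: "\<rho> (Xp UNIV ?L ?t) [^] (3 ^ k :: nat) = ?c"
      using X_pow_L[OF L t5, of UNIV] rho_pow[OF bX, of "3 ^ k"] D_UNIV[of ?L ?t] by simp
    show "\<exists>x\<in>carrier G. x [^] (3 ^ Suc k :: nat) = \<one> \<and> x [^] (3 ^ k :: nat) = ?c"
      using e1 e2 rho_closed[OF bX] by blast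
  qed
qed

definition PS :: "(nat \<Rightarrow> nat) set" where "PS = {\<sigma>. \<exists>n. \<sigma> permutes {..<n}}"

lemma PS_bij: "\<sigma> \<in> PS \<Longrightarrow> bij \<sigma>"
  by (auto simp: PS_def permutes_bij)

lemma sub_H: "subgroup (\<rho> ` PS) G"
proof (rule subgroupI)
  show "\<rho> ` PS \<subseteq> carrier G" using PS_bij rho_closed by blast
  have "id \<in> PS" unfolding PS_def using permutes_id by blast
  then show "\<rho> ` PS \<noteq> {}" by blast
next
  fix a assume "a \<in> \<rho> ` PS"
  then obtain \<sigma> n where s: "a = \<rho> \<sigma>" "\<sigma> permutes {..<n}" by (auto simp: PS_def)
  have p: "inv_into UNIV \<sigma> permutes {..<n}" using Permutations.permutes_inv[OF s(2)] by simp
  have "inv (\<rho> \<sigma>) = \<rho> (inv_into UNIV \<sigma>)"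
    by (rule rho_inv_eq) (use s p in \<open>auto simp: permutes_bij permutes_inv_o(2)\<close>)
  then have "inv a = \<rho> (inv_into UNIV \<sigma>)" using s by simp
  then show "inv a \<in> \<rho> ` PS" using p by (auto simp: PS_def)
next
  fix a b assume "a \<in> \<rho> ` PS" "b \<in> \<rho> ` PS"
  then obtain \<sigma> \<tau> n m where s: "a = \<rho> \<sigma>" "\<sigma> permutes {..<n}" "b = \<rho> \<tau>" "\<tau> permutes {..<m}"
    by (auto simp: PS_def)
  have "\<sigma> permutes {..<max n m}" by (rule permutes_subset[OF s(2)]) auto
  moreover have "\<tau> permutes {..<max n m}" by (rule permutes_subset[OF s(4)]) auto
  ultimately
  have "\<sigma> \<circ> \<tau> permutes {..<max n m}" by (rule permutes_compose[rotated])
  moreover have "a \<otimes> b = \<rho> (\<sigma> \<circ> \<tau>)" using s by (simp add: rho_mult permutes_bij)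
  ultimately show "a \<otimes> b \<in> \<rho> ` PS" by (auto simp: PS_def)
qed

lemma D_PS: assumes xs: "xs \<in> set Tl" and L: "0 < L" shows "D {0} L (tp xs) \<in> PS"
proof -
  have b: "bij (D {0} L (tp xs))" by (rule D_bij[OF Tl_t5[OF xs] Tl_cube[OF xs]])
  have "D {0} L (tp xs) permutes {..<5*L}" by (rule bij_supp_permutes[OF b D_supp[OF L]])
  then show ?thesis unfolding PS_def by blast
qed

lemma X_PS: assumes xs: "xs \<in> set Tl" and L: "0 < L" shows "Xp {0} L (tp xs) \<in> PS"
proof -
  have b: "bij (Xp {0} L (tp xs))" by (rule X_bij[OF L Tl_t5[OF xs] Tl_cube[OF xs]])
  have "Xp {0} L (tp xs) permutes {..<5*L}" by (rule bij_supp_permutes[OF b X_supp[OF L]])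
  then show ?thesis unfolding PS_def by blast
qed

lemma d_inv: assumes "xs \<in> set Tl"
  shows "inv (\<rho> (D A L (tp xs))) = \<rho> (D A L (tp xs) \<circ> D A L (tp xs))"
proof -
  have b: "bij (D A L (tp xs))" using D_bij[OF Tl_t5 Tl_cube] assms by blast
  show ?thesis
    by (rule rho_inv_eq) (use b D_cube3[OF Tl_t5[OF assms] Tl_cube[OF assms]] in \<open>auto simp: bij_comp o_assoc\<close>)
qed

lemma notTits: "\<not> tits_alternative G"
proof -
  let ?H = "\<rho> ` PS"
  let ?Gh = "G\<lparr>carrier := ?H\<rparr>"
  have sub: "subgroup ?H G" by (rule sub_H)
  interpret Gh: group ?Gh by (rule subgroup.subgroup_is_group[OF sub is_group])
  have nf: "\<not> has_nonabelian_free_subgroup ?Gh"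
  proof (rule Gh.torsion_no_free)
    fix g assume "g \<in> carrier ?Gh"
    then obtain \<sigma> n where s: "g = \<rho> \<sigma>" "\<sigma> permutes {..<n}" by (auto simp: PS_def)
    obtain k where k: "k > 0" "\<sigma> ^^ k = id" using perm_torsion[OF _ s(2)] by blast
    have "g [^] k = \<one>" using s k rho_pow[of \<sigma> k] rho_id permutes_bij by metis
    then show "\<exists>n>0. g [^]\<^bsub>?Gh\<^esub> (n::nat) = \<one>\<^bsub>?Gh\<^esub>" using k nat_pow_consistent[symmetric] by auto
  qed
  have vs: "\<not> virtually_solvable ?Gh"
  proof (rule Gh.not_vsolv)
    fix N :: nat
    let ?L = "3 ^ N :: nat"
    have L: "0 < ?L" by simp
    let ?d = "\<lambda>xs. \<rho> (D {0} ?L (tp xs))"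
    let ?S = "?d ` set Tl"
    have SH: "?S \<subseteq> ?H" using D_PS[OF _ L] by blast
    have nt: "\<exists>s\<in>?S. s \<noteq> \<one>\<^bsub>?Gh\<^esub>"
    proof -
      have "?d (Tl ! 0) \<noteq> \<one>"
        using rho_faithful[OF PS_bij[OF D_PS[OF Tl0 L]], of 2] D_moves[where p=2 and t="tp (Tl ! 0)" and A="{0}" and L="?L"]
          Tl_nontriv by simp
      then show ?thesis using Tl0 by auto
    qed
    have cm: "\<forall>s\<in>?S. \<exists>a\<in>?S. \<exists>b\<in>?S. s = a \<otimes>\<^bsub>?Gh\<^esub> b \<otimes>\<^bsub>?Gh\<^esub> inv\<^bsub>?Gh\<^esub> a \<otimes>\<^bsub>?Gh\<^esub> inv\<^bsub>?Gh\<^esub> b"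
    proof
      fix s assume "s \<in> ?S"
      then obtain xs where xs: "xs \<in> set Tl" "s = ?d xs" by blast
      obtain a b where ab: "a \<in> set Tl" "b \<in> set Tl" "tp xs = cm (tp a) (tp b)"
        using Tl_comm[OF xs(1)] by blast
      let ?Da = "D {0} ?L (tp a)" and ?Db = "D {0} ?L (tp b)"
      have ba: "bij ?Da" "bij ?Db" using D_bij[OF Tl_t5 Tl_cube] ab by blast+
      have "s = \<rho> (?Da \<circ> ?Db \<circ> (?Da \<circ> ?Da) \<circ> (?Db \<circ> ?Db))"
        using xs ab D_cm[OF Tl_t5[OF ab(1)] Tl_t5[OF ab(2)]] by simp
      also have "\<dots> = ?d a \<otimes> ?d b \<otimes> \<rho> (?Da \<circ> ?Da) \<otimes> \<rho> (?Db \<circ> ?Db)"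
        using ba by (simp add: rho_mult bij_comp)
      also have "\<dots> = ?d a \<otimes> ?d b \<otimes> inv (?d a) \<otimes> inv (?d b)"
        using d_inv ab by simp
      also have "\<dots> = ?d a \<otimes>\<^bsub>?Gh\<^esub> ?d b \<otimes>\<^bsub>?Gh\<^esub> inv\<^bsub>?Gh\<^esub> (?d a) \<otimes>\<^bsub>?Gh\<^esub> inv\<^bsub>?Gh\<^esub> (?d b)"
      proof -
        have "?d a \<in> ?H" "?d b \<in> ?H" using SH ab by auto
        then show ?thesis using sub by simp
      qed
      finally show "\<exists>a\<in>?S. \<exists>b\<in>?S. s = a \<otimes>\<^bsub>?Gh\<^esub> b \<otimes>\<^bsub>?Gh\<^esub> inv\<^bsub>?Gh\<^esub> a \<otimes>\<^bsub>?Gh\<^esub> inv\<^bsub>?Gh\<^esub> b"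
        using ab by blast
    qed
    have pw: "\<forall>s\<in>?S. \<exists>x\<in>carrier ?Gh. \<exists>k. N < 3 ^ Suc k \<and> x [^]\<^bsub>?Gh\<^esub> (3 ^ Suc k :: nat) = \<one>\<^bsub>?Gh\<^esub>
                 \<and> x [^]\<^bsub>?Gh\<^esub> (3 ^ k :: nat) = s"
    proof
      fix s assume "s \<in> ?S"
      then obtain xs where xs: "xs \<in> set Tl" "s = ?d xs" by blast
      have t5: "t5 (tp xs)" and cb: "\<forall>p<5. tp xs (tp xs (tp xs p)) = p"
        using Tl_t5[OF xs(1)] Tl_cube[OF xs(1)] by auto
      let ?x = "\<rho> (Xp {0} ?L (tp xs))"
      have bX: "bij (Xp {0} ?L (tp xs))" by (rule X_bij[OF L t5 cb])
      have xH: "?x \<in> carrier ?Gh" using X_PS[OF xs(1) L] by simp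
      have e1: "?x [^] (3 ^ Suc N :: nat) = \<one>"
        using X_pow_3L[OF L t5 cb, of "{0}"] rho_pow[OF bX, of "3 ^ Suc N"] rho_id
        by (simp add: mult.commute)
      have e2: "?x [^] (3 ^ N :: nat) = s"
        using X_pow_L[OF L t5, of "{0}"] rho_pow[OF bX, of "3 ^ N"] xs by simp
      have "N < 3 ^ Suc N" using lt_pow3[of N] by simp
      then show "\<exists>x\<in>carrier ?Gh. \<exists>k. N < 3 ^ Suc k \<and> x [^]\<^bsub>?Gh\<^esub> (3 ^ Suc k :: nat) = \<one>\<^bsub>?Gh\<^esub>
                 \<and> x [^]\<^bsub>?Gh\<^esub> (3 ^ k :: nat) = s"
        using xH e1 e2 nat_pow_consistent[symmetric] by (intro bexI[of _ ?x] exI[of _ N]) auto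
    qed
    have "?S \<subseteq> carrier ?Gh" using SH by simp
    then show "\<exists>S\<subseteq>carrier ?Gh. (\<exists>s\<in>S. s \<noteq> \<one>\<^bsub>?Gh\<^esub>) \<and>
     (\<forall>s\<in>S. \<exists>a\<in>S. \<exists>b\<in>S. s = a \<otimes>\<^bsub>?Gh\<^esub> b \<otimes>\<^bsub>?Gh\<^esub> inv\<^bsub>?Gh\<^esub> a \<otimes>\<^bsub>?Gh\<^esub> inv\<^bsub>?Gh\<^esub> b) \<and>
     (\<forall>s\<in>S. \<exists>x\<in>carrier ?Gh. \<exists>k. N < 3 ^ Suc k \<and> x [^]\<^bsub>?Gh\<^esub> (3 ^ Suc k :: nat) = \<one>\<^bsub>?Gh\<^esub>
          \<and> x [^]\<^bsub>?Gh\<^esub> (3 ^ k :: nat) = s)"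
      using nt cm pw by blast
  qed
  show ?thesis unfolding tits_alternative_def
  proof
    assume A: "\<forall>H. subgroup H G \<longrightarrow> virtually_solvable (G\<lparr>carrier := H\<rparr>) \<or> has_nonabelian_free_subgroup (G\<lparr>carrier := H\<rparr>)"
    have "virtually_solvable ?Gh \<or> has_nonabelian_free_subgroup ?Gh" using A sub by blast
    then show False using nf vs by blast
  qed
qed

end


definition rhoO :: "(nat \<Rightarrow> nat) \<Rightarrow> ((nat \<times> bool) list \<Rightarrow> (nat \<times> bool) list) set" where
  "rhoO \<sigma> = inner_auto F_infty #>\<^bsub>AutoGroup F_infty\<^esub> rhoA \<sigma>"

lemma perm_rep_Aut: "perm_rep (AutoGroup F_infty) rhoA"
proof (intro perm_rep.intro perm_rep_axioms.intro)
  show "group (AutoGroup F_infty)" by (rule group.AutoGroup[OF group_F])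
  fix \<sigma> \<tau> x
  show "bij \<sigma> \<Longrightarrow> rhoA \<sigma> \<in> carrier (AutoGroup F_infty)" by (simp add: AutoGroup_carrier rhoA_auto)
  show "bij \<sigma> \<Longrightarrow> bij \<tau> \<Longrightarrow> rhoA (\<sigma> \<circ> \<tau>) = rhoA \<sigma> \<otimes>\<^bsub>AutoGroup F_infty\<^esub> rhoA \<tau>"
    by (rule rhoA_mult)
  show "rhoA id = \<one>\<^bsub>AutoGroup F_infty\<^esub>" by (rule rhoA_id)
  show "bij \<sigma> \<Longrightarrow> \<sigma> x \<noteq> x \<Longrightarrow> rhoA \<sigma> \<noteq> \<one>\<^bsub>AutoGroup F_infty\<^esub>" by (rule rhoA_nontriv)
qed

lemma perm_rep_Out: "perm_rep (OutGroup F_infty) rhoO"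
proof -
  interpret F: group F_infty by (rule group_F)
  interpret A: group "AutoGroup F_infty" by (rule F.AutoGroup)
  interpret N: normal "inner_auto F_infty" "AutoGroup F_infty" by (rule F.inner_normal)
  have rc: "bij \<sigma> \<Longrightarrow> rhoA \<sigma> \<in> carrier (AutoGroup F_infty)" for \<sigma>
    by (simp add: AutoGroup_carrier rhoA_auto)
  show ?thesis
  proof (intro perm_rep.intro perm_rep_axioms.intro)
    show "group (OutGroup F_infty)" by (rule F.group_OutGroup)
    fix \<sigma> \<tau> x
    show "bij \<sigma> \<Longrightarrow> rhoO \<sigma> \<in> carrier (OutGroup F_infty)"
      unfolding rhoO_def OutGroup_def FactGroup_def
      using A.rcosetsI[OF N.subset rc] by simp
    show "bij \<sigma> \<Longrightarrow> bij \<tau> \<Longrightarrow> rhoO (\<sigma> \<circ> \<tau>) = rhoO \<sigma> \<otimes>\<^bsub>OutGroup F_infty\<^esub> rhoO \<tau>"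
      unfolding rhoO_def OutGroup_def FactGroup_def
      by (simp add: N.rcos_sum rc rhoA_mult)
    show "rhoO id = \<one>\<^bsub>OutGroup F_infty\<^esub>"
      unfolding rhoO_def OutGroup_def FactGroup_def
      by (simp add: rhoA_id A.coset_mult_one N.subset)
    show "bij \<sigma> \<Longrightarrow> \<sigma> x \<noteq> x \<Longrightarrow> rhoO \<sigma> \<noteq> \<one>\<^bsub>OutGroup F_infty\<^esub>"
    proof
      assume b: "bij \<sigma>" and x: "\<sigma> x \<noteq> x" and e: "rhoO \<sigma> = \<one>\<^bsub>OutGroup F_infty\<^esub>"
      have "rhoA \<sigma> \<in> inner_auto F_infty #>\<^bsub>AutoGroup F_infty\<^esub> rhoA \<sigma>"
        by (rule A.rcos_self[OF rc[OF b] normal_imp_subgroup[OF F.inner_normal]])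
      also have "\<dots> = inner_auto F_infty" using e
        unfolding rhoO_def OutGroup_def FactGroup_def by simp
      finally show False using rhoA_not_inner[of \<sigma> x, OF x] by simp
    qed
  qed
qed

theorem mainTheorem6:
  shows "\<not> residually_finite (AutoGroup F_infty) \<and> \<not> residually_finite (OutGroup F_infty)
       \<and> \<not> tits_alternative (AutoGroup F_infty) \<and> \<not> tits_alternative (OutGroup F_infty)"
  using perm_rep.notRF[OF perm_rep_Aut] perm_rep.notRF[OF perm_rep_Out]
    perm_rep.notTits[OF perm_rep_Aut] perm_rep.notTits[OF perm_rep_Out] by blast


end
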